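(* Let $n$ be a security parameter and $F\colon\{0,1\}^n\to\{0,1\}^m$ a function. If $F^{-1}$ has accessible Shannon entropy at most $k$, then for any $p=p(n)\in(0,1)$, $F^{-1}$ has $p$-accessible max-entropy at most $k/p+O(2^{-k/p})$.
   Context: An $F$-collision-finder is a randomized algorithm $A$ with $A(x;r)\in F^{-1}(F(x))$ for all $x$ and coins $r$. Let $X$ be uniform on $\{0,1\}^n$ and $R$ uniform coins of $A$. $F^{-1}$ has accessible Shannon entropy at most $k$ if for every probabilistic polynomial-time (PPT) $F$-collision-finder $A$, $H(A(X;R)\mid X)\le k$ for all sufficiently large $n$. $F^{-1}$ has $p$-accessible max-entropy at most $k'$ if for every PPT $F$-collision-finder $A$ there is a family of sets $\{\mathcal{L}(x)\}_x$, each of size at most $2^{k'}$, with $x\in\mathcal{L}(x)$, such that $\Pr[A(X;R)\in\mathcal{L}(X)]\ge1-p$ for all sufficiently large $n$. *)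

theory Defs
  imports "HOL-Probability.Probability"
begin

definition bitstrings :: "nat \<Rightarrow> bool list set" where
  "bitstrings n = {xs. length xs = n}"

definition uniform_bits :: "nat \<Rightarrow> bool list pmf" where
  "uniform_bits n = pmf_of_set (bitstrings n)"

text \<open>A (uniform) randomized algorithm: a coin-length function rho and
  the deterministic map A n x r (security parameter n, input x, coins r).\<close>
type_synonym algorithm = "(nat \<Rightarrow> nat) \<times> (nat \<Rightarrow> bool list \<Rightarrow> bool list \<Rightarrow> bool list)"

type_synonym func_family = "nat \<Rightarrow> bool list \<Rightarrow> bool list"

definition collision_finder :: "func_family \<Rightarrow> algorithm \<Rightarrow> bool" where
  "collision_finder F alg \<longleftrightarrow>
     (\<forall>n x r. x \<in> bitstrings n \<longrightarrow> r \<in> bitstrings (fst alg n) \<longrightarrow>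
        snd alg n x r \<in> bitstrings n \<and> F n (snd alg n x r) = F n x)"

definition shannon_entropy :: "'a pmf \<Rightarrow> real" where
  "shannon_entropy q = (\<Sum>y\<in>set_pmf q. pmf q y * log 2 (1 / pmf q y))"

definition out_dist :: "algorithm \<Rightarrow> nat \<Rightarrow> bool list \<Rightarrow> bool list pmf" where
  "out_dist alg n x = map_pmf (snd alg n x) (uniform_bits (fst alg n))"

definition cond_entropy :: "algorithm \<Rightarrow> nat \<Rightarrow> real" where
  "cond_entropy alg n =
     measure_pmf.expectation (uniform_bits n) (\<lambda>x. shannon_entropy (out_dist alg n x))"

text \<open>The class of efficient (PPT) algorithms is abstracted as a set C of algorithms.\<close>
definition accessible_shannon_le ::
  "algorithm set \<Rightarrow> func_family \<Rightarrow> (nat \<Rightarrow> real) \<Rightarrow> bool" where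
  "accessible_shannon_le C F k \<longleftrightarrow>
     (\<forall>alg\<in>C. collision_finder F alg \<longrightarrow>
        (\<forall>\<^sub>F n in sequentially. cond_entropy alg n \<le> k n))"

definition accessible_maxent_le ::
  "algorithm set \<Rightarrow> func_family \<Rightarrow> (nat \<Rightarrow> real) \<Rightarrow> (nat \<Rightarrow> real) \<Rightarrow> bool" where
  "accessible_maxent_le C F p k' \<longleftrightarrow>
     (\<forall>alg\<in>C. collision_finder F alg \<longrightarrow>
        (\<forall>\<^sub>F n in sequentially.
           \<exists>L :: bool list \<Rightarrow> bool list set.
             (\<forall>x\<in>bitstrings n. x \<in> L x \<and> finite (L x) \<and> real (card (L x)) \<le> 2 powr k' n) \<and>
             measure_pmf.prob (pair_pmf (uniform_bits n) (uniform_bits (fst alg n)))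
               {(x, r). snd alg n x r \<in> L x} \<ge> 1 - p n))"

end

theory Submission imports Defs begin

lemma key:
  fixes q :: "'a pmf" and b :: real
  assumes fin: "finite (set_pmf q)" and b: "b > 0"
  shows "real (card {y \<in> set_pmf q. pmf q y \<ge> 2 powr -b}) \<le> 2 powr b"
    and "measure_pmf.prob q (insert x {y \<in> set_pmf q. pmf q y \<ge> 2 powr -b}) \<ge> 1 - shannon_entropy q / b"
proof -
  define T where "T = {y \<in> set_pmf q. pmf q y \<ge> 2 powr -b}"
  have finT: "finite T" using fin by (simp add: T_def)
  have "real (card T) * 2 powr -b \<le> sum (pmf q) T"
    using sum_bounded_below[of T "2 powr -b" "pmf q"] by (auto simp: T_def)
  also have "\<dots> = measure_pmf.prob q T" using finT by (simp add: measure_measure_pmf_finite)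
  also have "\<dots> \<le> 1" by simp
  finally have "real (card T) * 2 powr -b * 2 powr b \<le> 2 powr b" by simp
  then show "real (card {y \<in> set_pmf q. pmf q y \<ge> 2 powr -b}) \<le> 2 powr b"
    by (simp add: T_def mult.assoc powr_add[symmetric])
  have ent_nn: "0 \<le> pmf q y * log 2 (1 / pmf q y)" if "y \<in> set_pmf q" for y
  proof -
    have "0 < pmf q y" "pmf q y \<le> 1" using that by (auto simp: set_pmf_iff pmf_le_1 less_le)
    then show ?thesis by simp
  qed
  have small: "pmf q y \<le> pmf q y * log 2 (1 / pmf q y) / b" if "y \<in> set_pmf q - T" for y
  proof -
    have p0: "0 < pmf q y" using that by (auto simp: set_pmf_iff less_le)
    have "pmf q y < 2 powr -b" using that by (auto simp: T_def)
    then have "1 / pmf q y > 2 powr b" using p0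
      by (simp add: powr_minus field_simps)
    then have "b < log 2 (1 / pmf q y)" using p0 by (simp add: less_log_iff)
    then have "pmf q y * b \<le> pmf q y * log 2 (1 / pmf q y)" using p0 by simp
    then show ?thesis using b by (simp add: field_simps)
  qed
  have "measure_pmf.prob q (set_pmf q - T) = sum (pmf q) (set_pmf q - T)"
    using fin by (simp add: measure_measure_pmf_finite)
  also have "\<dots> \<le> (\<Sum>y\<in>set_pmf q - T. pmf q y * log 2 (1 / pmf q y) / b)"
    by (rule sum_mono) (rule small)
  also have "\<dots> \<le> (\<Sum>y\<in>set_pmf q. pmf q y * log 2 (1 / pmf q y) / b)"
    using fin ent_nn b by (intro sum_mono2) auto
  also have "\<dots> = shannon_entropy q / b"
    by (simp add: shannon_entropy_def sum_divide_distrib)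
  finally have A: "measure_pmf.prob q (set_pmf q - T) \<le> shannon_entropy q / b" .
  have one: "measure_pmf.prob q (set_pmf q) = 1"
    by (simp add: measure_pmf.prob_eq_1 AE_pmfI)
  have "measure_pmf.prob q (set_pmf q - T) = measure_pmf.prob q (set_pmf q) - measure_pmf.prob q T"
    by (rule measure_pmf.finite_measure_Diff) (auto simp: T_def)
  then have "measure_pmf.prob q (set_pmf q - T) = 1 - measure_pmf.prob q T"
    using one by simp
  moreover have "measure_pmf.prob q T \<le> measure_pmf.prob q (insert x T)"
    by (rule measure_pmf.finite_measure_mono) auto
  ultimately show "measure_pmf.prob q (insert x {y \<in> set_pmf q. pmf q y \<ge> 2 powr -b}) \<ge> 1 - shannon_entropy q / b"
    using A by (simp add: T_def)
qed

lemma pairprob: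
  "measure_pmf.prob (pair_pmf P U) {(x, r). f x r \<in> L x} =
   measure_pmf.expectation P (\<lambda>x. measure_pmf.prob (map_pmf (f x) U) (L x))"
proof -
  have "measure_pmf.prob (pair_pmf P U) {(x, r). f x r \<in> L x} =
     measure_pmf.prob (bind_pmf P (\<lambda>x. map_pmf (\<lambda>r. (x,r)) U)) {(x, r). f x r \<in> L x}"
    by (simp add: pair_pmf_def map_pmf_def)
  also have "\<dots> = measure_pmf.expectation P (\<lambda>x. measure_pmf.prob (map_pmf (\<lambda>r. (x,r)) U) {(x, r). f x r \<in> L x})"
    unfolding measure_pmf_bind
    by (rule measure_pmf.measure_bind[where N="count_space UNIV"]) (auto simp: measure_pmf_in_subprob_algebra)
  also have "\<dots> = measure_pmf.expectation P (\<lambda>x. measure_pmf.prob (map_pmf (f x) U) (L x))"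
    by (simp add: vimage_def)
  finally show ?thesis .
qed

lemma finite_bitstrings: "finite (bitstrings n)"
proof -
  have "bitstrings n = {xs. set xs \<subseteq> UNIV \<and> length xs = n}" by (simp add: bitstrings_def)
  then show ?thesis using finite_lists_length_eq[of "UNIV :: bool set" n] by simp
qed

lemma nonempty_bitstrings: "bitstrings n \<noteq> {}"
  by (auto simp: bitstrings_def intro!: exI[of _ "replicate n True"])

lemma set_uniform_bits: "set_pmf (uniform_bits n) = bitstrings n"
  by (simp add: uniform_bits_def finite_bitstrings nonempty_bitstrings)

lemma entropy_nonneg: "finite (set_pmf q) \<Longrightarrow> 0 \<le> shannon_entropy q"
  unfolding shannon_entropy_def
proof (rule sum_nonneg)
  fix y assume "y \<in> set_pmf q"
  then have "0 < pmf q y" "pmf q y \<le> 1" by (auto simp: set_pmf_iff pmf_le_1 less_le)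
  then show "0 \<le> pmf q y * log 2 (1 / pmf q y)" by simp
qed

lemma finite_out: "finite (set_pmf (out_dist alg n x))"
  by (simp add: out_dist_def set_uniform_bits finite_bitstrings)

lemma size_bound:
  fixes a :: real assumes "0 \<le> a"
  shows "2 powr a + 2 \<le> 2 powr (a + 2 / ln 2 * 2 powr (- a))"
proof -
  define t where "t = 2 powr (-a)"
  have at: "2 powr a * t = 1" by (simp add: t_def powr_add[symmetric])
  have "2 powr (a + 2 / ln 2 * t) = 2 powr a * exp (2 * t)"
    by (simp add: powr_def exp_add[symmetric] algebra_simps)
  also have "\<dots> \<ge> 2 powr a * (1 + 2 * t)"
    by (intro mult_left_mono) (auto simp: exp_ge_add_one_self)
  finally show ?thesis using at by (simp add: t_def algebra_simps)
qed

theorem lemma3p8: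
  "\<exists>c::real. \<forall>(C :: algorithm set) (F :: func_family) (k :: nat \<Rightarrow> real) (p :: nat \<Rightarrow> real).
     (\<forall>n. 0 < p n \<and> p n < 1) \<longrightarrow>
     accessible_shannon_le C F k \<longrightarrow>
     accessible_maxent_le C F p (\<lambda>n. k n / p n + c * 2 powr (- (k n / p n)))"
proof (intro exI allI impI)
  fix C :: "algorithm set" and F :: func_family and k p :: "nat \<Rightarrow> real"
  assume hp: "\<forall>n. 0 < p n \<and> p n < 1" and hs: "accessible_shannon_le C F k"
  show "accessible_maxent_le C F p (\<lambda>n. k n / p n + 2 / ln 2 * 2 powr (- (k n / p n)))"
    unfolding accessible_maxent_le_def
  proof (intro ballI impI)
    fix alg assume alg: "alg \<in> C" "collision_finder F alg"
    have ev: "\<forall>\<^sub>F n in sequentially. cond_entropy alg n \<le> k n"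
      using hs alg by (auto simp: accessible_shannon_le_def)
    show "\<forall>\<^sub>F n in sequentially.
           \<exists>L :: bool list \<Rightarrow> bool list set.
             (\<forall>x\<in>bitstrings n. x \<in> L x \<and> finite (L x) \<and> real (card (L x)) \<le> 2 powr (k n / p n + 2 / ln 2 * 2 powr (- (k n / p n)))) \<and>
             measure_pmf.prob (pair_pmf (uniform_bits n) (uniform_bits (fst alg n)))
               {(x, r). snd alg n x r \<in> L x} \<ge> 1 - p n"
    proof (rule eventually_mono[OF ev])
      fix n assume hn: "cond_entropy alg n \<le> k n"
      define a where "a = k n / p n"
      define Q where "Q = out_dist alg n"
      define b where "b = log 2 (2 powr a + 1)"
      define L where "L = (\<lambda>x. insert x {y \<in> set_pmf (Q x). pmf (Q x) y \<ge> 2 powr -b})"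
      have pn: "0 < p n" "p n < 1" using hp by auto
      have finP: "finite (set_pmf (uniform_bits n))" by (simp add: set_uniform_bits finite_bitstrings)
      have "0 \<le> cond_entropy alg n" unfolding cond_entropy_def
        by (rule integral_nonneg_AE) (auto intro!: AE_pmfI entropy_nonneg finite_out)
      then have k0: "0 \<le> k n" using hn by simp
      then have a0: "0 \<le> a" using pn by (simp add: a_def)
      have "1 < 2 powr a + 1" by simp
      have pa: "0 < 2 powr a" by simp
      have pos: "0 < 2 powr a + 1" using pa by linarith
      have "log 2 1 < log 2 (2 powr a + 1)" using log_less[of 2 1 "2 powr a + 1"] pa by linarith
      then have b0: "0 < b" by (simp add: b_def)
      have b2: "2 powr b = 2 powr a + 1" by (simp add: b_def add_pos_pos)
      have ab: "a \<le> b"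
      proof -
        have "2 powr a \<le> 2 powr b" using b2 by simp
        then show ?thesis by simp
      qed
      have finQ: "\<And>x. finite (set_pmf (Q x))" by (simp add: Q_def finite_out)
      have cardL: "real (card (L x)) \<le> 2 powr (a + 2 / ln 2 * 2 powr (- a))" for x
      proof -
        have "card (L x) \<le> Suc (card {y \<in> set_pmf (Q x). pmf (Q x) y \<ge> 2 powr -b})"
          unfolding L_def using finQ[of x] by (simp add: card_insert_if)
        then have "real (card (L x)) \<le> real (card {y \<in> set_pmf (Q x). pmf (Q x) y \<ge> 2 powr -b}) + 1"
          by linarith
        also have "\<dots> \<le> 2 powr b + 1" using key(1)[OF finQ b0, of x] by linarith
        also have "\<dots> = 2 powr a + 2" using b2 by simp
        also have "\<dots> \<le> 2 powr (a + 2 / ln 2 * 2 powr (- a))" by (rule size_bound[OF a0])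
        finally show ?thesis .
      qed
      have "measure_pmf.prob (pair_pmf (uniform_bits n) (uniform_bits (fst alg n)))
               {(x, r). snd alg n x r \<in> L x}
           = measure_pmf.expectation (uniform_bits n) (\<lambda>x. measure_pmf.prob (Q x) (L x))"
        by (simp add: pairprob Q_def out_dist_def)
      also have "\<dots> \<ge> measure_pmf.expectation (uniform_bits n) (\<lambda>x. 1 - shannon_entropy (Q x) / b)"
        by (rule integral_mono_AE)
          (auto intro!: AE_pmfI integrable_measure_pmf_finite finP key(2)[OF finQ b0] simp: L_def)
      moreover have "measure_pmf.expectation (uniform_bits n) (\<lambda>x. 1 - shannon_entropy (Q x) / b)
          = 1 - cond_entropy alg n / b"
        by (simp add: cond_entropy_def Q_def integrable_measure_pmf_finite[OF finP])
      moreover have "cond_entropy alg n / b \<le> p n"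
      proof -
        have "cond_entropy alg n \<le> a * p n" using hn pn by (simp add: a_def)
        also have "\<dots> \<le> b * p n" using ab pn by simp
        finally show ?thesis using b0 by (simp add: field_simps)
      qed
      ultimately have "measure_pmf.prob (pair_pmf (uniform_bits n) (uniform_bits (fst alg n)))
               {(x, r). snd alg n x r \<in> L x} \<ge> 1 - p n" by linarith
      moreover have "\<forall>x\<in>bitstrings n. x \<in> L x \<and> finite (L x) \<and> real (card (L x)) \<le> 2 powr (k n / p n + 2 / ln 2 * 2 powr (- (k n / p n)))"
        using cardL finQ by (auto simp: L_def a_def)
      ultimately show "\<exists>L :: bool list \<Rightarrow> bool list set.
             (\<forall>x\<in>bitstrings n. x \<in> L x \<and> finite (L x) \<and> real (card (L x)) \<le> 2 powr (k n / p n + 2 / ln 2 * 2 powr (- (k n / p n)))) \<and>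
             measure_pmf.prob (pair_pmf (uniform_bits n) (uniform_bits (fst alg n)))
               {(x, r). snd alg n x r \<in> L x} \<ge> 1 - p n" by blast
    qed
  qed
qed

end
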